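(* Assume (A1)–(A3), let $p>0$, and let $g:[0,\infty)\to\mathbb{R}$ be a continuous function satisfying, for all $u>0$, \[ g(u)=\frac{\mu}{u^\gamma e^{-\alpha/u}}\int_0^u t^{\gamma-2}e^{-\alpha/t}\Big(p\,\bar F(t)+\int_0^t g(z)\bar F(t-z)\,dz\Big)dt. \] Then $g$ is bounded on $[0,\infty)$, i.e. $\sup_{u\ge0}|g(u)|<\infty$.
   Context: $\xi$ is a positive random variable with distribution function $F$, $\bar F=1-F$. Parameters: $\kappa\in(0,1]$, $a\in\mathbb{R}$, $r\ge0$, $\sigma>0$, $c>0$, $\lambda>0$, $\gamma=\dfrac{2((a-r)\kappa+r)}{\kappa^2\sigma^2}$, $\alpha=\dfrac{2c}{\kappa^2\sigma^2}$, $\mu=\dfrac{2\lambda}{\kappa^2\sigma^2}$. Assumptions: (A1) $F(0)=0$; (A2) there is $\varepsilon>0$ with $\mathbb{E}[\xi^\varepsilon]<\infty$; (A3) $\gamma>1$. *)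

theory Defs
  imports "HOL-Probability.Probability"
begin

definition Fdist :: "'a measure \<Rightarrow> ('a \<Rightarrow> real) \<Rightarrow> real \<Rightarrow> real" where
  "Fdist M \<xi> x = measure M {\<omega> \<in> space M. \<xi> \<omega> \<le> x}"

definition Fbar :: "'a measure \<Rightarrow> ('a \<Rightarrow> real) \<Rightarrow> real \<Rightarrow> real" where
  "Fbar M \<xi> x = 1 - Fdist M \<xi> x"

end

theory Submission imports Defs begin

lemma inner_bound:
  fixes f :: "real \<Rightarrow> real"
  assumes "0 \<le> t" "0 \<le> M" "0 \<le> \<delta>" "0 \<le> T"
    and b1: "\<And>z. z \<in> {0..t} \<Longrightarrow> \<bar>f z\<bar> \<le> M"
    and b2: "\<And>z. z \<in> {0..t} \<Longrightarrow> z \<le> t - T \<Longrightarrow> \<bar>f z\<bar> \<le> M * \<delta>"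
  shows "\<bar>integral {0..t} f\<bar> \<le> M * (\<delta> * t + T)"
proof (cases "f integrable_on {0..t}")
  case False
  then show ?thesis using assms by (simp add: not_integrable_integral)
next
  case True
  show ?thesis
  proof (cases "t \<le> T")
    case True2: True
    have "norm (integral {0..t} f) \<le> M * Henstock_Kurzweil_Integration.content (cbox 0 t)"
      using has_integral_bound[of M f "integral {0..t} f" 0 t] True b1 assms
      by (auto simp: integrable_integral)
    then have "\<bar>integral {0..t} f\<bar> \<le> M * t" using assms by simp
    also have "\<dots> \<le> M * (\<delta> * t + T)" using True2 assms
      by (intro mult_left_mono) (auto intro: add_increasing simp: mult_nonneg_nonneg)
    finally show ?thesis .
  next
    case False
    have i1: "f integrable_on {0..t-T}" "f integrable_on {t-T..t}"
      using True False assms by (auto intro: integrable_subinterval_real)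
    have e: "integral {0..t} f = integral {0..t-T} f + integral {t-T..t} f"
      using Henstock_Kurzweil_Integration.integral_combine[where a=0 and c="t-T" and b=t and f=f] True False assms by auto
    have n1: "norm (integral {0..t-T} f) \<le> (M*\<delta>) * Henstock_Kurzweil_Integration.content (cbox 0 (t-T))"
      using has_integral_bound[of "M*\<delta>" f "integral {0..t-T} f" 0 "t-T"] i1 b2 assms False
      by (auto simp: integrable_integral)
    have n2: "norm (integral {t-T..t} f) \<le> M * Henstock_Kurzweil_Integration.content (cbox (t-T) t)"
      using has_integral_bound[of M f "integral {t-T..t} f" "t-T" t] i1 b1 assms False
      by (auto simp: integrable_integral)
    have "\<bar>integral {0..t} f\<bar> \<le> (M*\<delta>) * (t - T) + M * T"
      using n1 n2 False assms unfolding e by auto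
    also have "\<dots> \<le> M * (\<delta> * t + T)" using assms
      by (simp add: algebra_simps mult_nonneg_nonneg)
    finally show ?thesis .
  qed
qed

lemma outer_bound:
  fixes f :: "real \<Rightarrow> real"
  assumes "0 \<le> s" "1 < \<gamma>" "0 \<le> c1" "0 \<le> c2"
    and b: "\<And>t. t \<in> {0..s} \<Longrightarrow> \<bar>f t\<bar> \<le> c1 * t powr (\<gamma>-2) + c2 * t powr (\<gamma>-1)"
  shows "\<bar>integral {0..s} f\<bar> \<le> c1 * (s powr (\<gamma>-1) / (\<gamma>-1)) + c2 * (s powr \<gamma> / \<gamma>)"
proof -
  have h1: "((\<lambda>x. x powr (\<gamma>-2)) has_integral (s powr (\<gamma>-1) / (\<gamma>-1))) {0..s}"
    using has_integral_powr_from_0[of "\<gamma>-2" s] assms by (simp add: algebra_simps)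
  have h2: "((\<lambda>x. x powr (\<gamma>-1)) has_integral (s powr \<gamma> / \<gamma>)) {0..s}"
    using has_integral_powr_from_0[of "\<gamma>-1" s] assms by (simp add: algebra_simps)
  have H: "((\<lambda>x. c1 * x powr (\<gamma>-2) + c2 * x powr (\<gamma>-1)) has_integral
      (c1 * (s powr (\<gamma>-1) / (\<gamma>-1)) + c2 * (s powr \<gamma> / \<gamma>))) {0..s}"
    by (intro has_integral_add has_integral_mult_right h1 h2)
  show ?thesis
  proof (cases "f integrable_on {0..s}")
    case False
    then have "integral {0..s} f = 0" by (simp add: not_integrable_integral)
    moreover have "0 \<le> c1 * (s powr (\<gamma>-1) / (\<gamma>-1)) + c2 * (s powr \<gamma> / \<gamma>)"
      using assms by (intro add_nonneg_nonneg mult_nonneg_nonneg) auto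
    ultimately show ?thesis by simp
  next
    case True
    have "norm (integral {0..s} f) \<le> integral {0..s} (\<lambda>x. c1 * x powr (\<gamma>-2) + c2 * x powr (\<gamma>-1))"
      using integral_norm_bound_integral[OF True has_integral_integrable[OF H]] b by auto
    then show ?thesis using integral_unique[OF H] by simp
  qed
qed

lemma Fbar_props:
  assumes "prob_space M" "\<xi> \<in> borel_measurable M"
  shows "0 \<le> Fbar M \<xi> x" "Fbar M \<xi> x \<le> 1"
proof -
  interpret prob_space M by fact
  show "0 \<le> Fbar M \<xi> x" unfolding Fbar_def Fdist_def by simp
  show "Fbar M \<xi> x \<le> 1" unfolding Fbar_def Fdist_def by simp
qed

lemma Fbar_lim:
  assumes "prob_space M" "\<xi> \<in> borel_measurable M" "\<delta> > 0"
  shows "\<exists>T\<ge>0. \<forall>x\<ge>T. Fbar M \<xi> x \<le> \<delta>"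
proof -
  interpret prob_space M by fact
  have rd: "real_distribution (distr M borel \<xi>)" using assms(2) by simp
  have eq: "Fdist M \<xi> x = cdf (distr M borel \<xi>) x" for x
  proof -
    have "cdf (distr M borel \<xi>) x = measure M (\<xi> -` {..x} \<inter> space M)"
      unfolding cdf_def using assms(2) by (simp add: measure_distr)
    also have "\<xi> -` {..x} \<inter> space M = {\<omega> \<in> space M. \<xi> \<omega> \<le> x}" by auto
    finally show ?thesis unfolding Fdist_def by simp
  qed
  have "((\<lambda>x. Fdist M \<xi> x) \<longlongrightarrow> 1) at_top"
    unfolding eq using real_distribution.cdf_lim_at_top_prob[OF rd] by simp
  then have "\<forall>\<^sub>F x in at_top. Fdist M \<xi> x > 1 - \<delta>"
    using assms(3) by (intro order_tendstoD) auto
  then obtain T where T: "\<And>x. x \<ge> T \<Longrightarrow> Fdist M \<xi> x > 1 - \<delta>"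
    unfolding eventually_at_top_linorder by blast
  show ?thesis
    by (rule exI[of _ "max T 0"]) (use T in \<open>fastforce simp: Fbar_def\<close>)
qed

theorem lemma2:
  fixes M :: "'a measure" and \<xi> :: "'a \<Rightarrow> real"
    and \<kappa> a r \<sigma> c lam \<epsilon> p :: real and g :: "real \<Rightarrow> real"
  assumes "prob_space M"
    and "\<xi> \<in> borel_measurable M"
    and "AE \<omega> in M. \<xi> \<omega> > 0"
    and A1: "Fdist M \<xi> 0 = 0"
    and A2: "\<epsilon> > 0" "integrable M (\<lambda>\<omega>. \<xi> \<omega> powr \<epsilon>)"
    and "0 < \<kappa>" "\<kappa> \<le> 1" "0 \<le> r" "0 < \<sigma>" "0 < c" "0 < lam"
    and A3: "2 * ((a - r) * \<kappa> + r) / (\<kappa>\<^sup>2 * \<sigma>\<^sup>2) > 1"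
    and "p > 0"
    and "continuous_on {0..} g"
    and "\<forall>u>0. g u =
      (2 * lam / (\<kappa>\<^sup>2 * \<sigma>\<^sup>2)) /
        (u powr (2 * ((a - r) * \<kappa> + r) / (\<kappa>\<^sup>2 * \<sigma>\<^sup>2)) * exp (- (2 * c / (\<kappa>\<^sup>2 * \<sigma>\<^sup>2)) / u))
      * integral {0..u} (\<lambda>t. t powr (2 * ((a - r) * \<kappa> + r) / (\<kappa>\<^sup>2 * \<sigma>\<^sup>2) - 2)
            * exp (- (2 * c / (\<kappa>\<^sup>2 * \<sigma>\<^sup>2)) / t)
            * (p * Fbar M \<xi> t + integral {0..t} (\<lambda>z. g z * Fbar M \<xi> (t - z))))"
  shows "bounded (g ` {0..})"
proof -
  define \<gamma> where "\<gamma> = 2 * ((a - r) * \<kappa> + r) / (\<kappa>\<^sup>2 * \<sigma>\<^sup>2)"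
  define \<alpha> where "\<alpha> = 2 * c / (\<kappa>\<^sup>2 * \<sigma>\<^sup>2)"
  define \<mu> where "\<mu> = 2 * lam / (\<kappa>\<^sup>2 * \<sigma>\<^sup>2)"
  define Fb where "Fb = Fbar M \<xi>"
  have eqn: "\<And>u. u > 0 \<Longrightarrow> g u = \<mu> / (u powr \<gamma> * exp (- \<alpha> / u))
      * integral {0..u} (\<lambda>t. t powr (\<gamma> - 2) * exp (- \<alpha> / t)
            * (p * Fb t + integral {0..t} (\<lambda>z. g z * Fb (t - z))))"
    using assms(16) unfolding \<gamma>_def \<alpha>_def \<mu>_def Fb_def by blast
  have g1: "\<gamma> > 1" using A3 unfolding \<gamma>_def .
  have apos: "\<alpha> > 0" unfolding \<alpha>_def using assms by (simp add: divide_pos_pos)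
  have mpos: "\<mu> > 0" unfolding \<mu>_def using assms by (simp add: divide_pos_pos)
  have Fb01: "0 \<le> Fb x" "Fb x \<le> 1" for x
    unfolding Fb_def using Fbar_props[OF assms(1,2)] by auto
  define E where "E = \<mu> * exp \<alpha>"
  have Epos: "E > 0" unfolding E_def using mpos by simp
  define \<delta> where "\<delta> = \<gamma> / (4 * E)"
  have dpos: "\<delta> > 0" unfolding \<delta>_def using Epos g1 by simp
  obtain T where T0: "T \<ge> 0" and T: "\<And>x. x \<ge> T \<Longrightarrow> Fb x \<le> \<delta>"
    using Fbar_lim[OF assms(1,2) dpos] unfolding Fb_def by blast
  define U where "U = max 1 (4 * E * T / (\<gamma> - 1))"
  define P where "P = E * p / (\<gamma> - 1)"
  have key: "\<bar>g s\<bar> \<le> P + K / 2"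
    if sU: "s > U" and K0: "0 \<le> K" and Kb: "\<And>y. y \<in> {0..s} \<Longrightarrow> \<bar>g y\<bar> \<le> K" for s K
  proof -
    have s1: "s \<ge> 1" and s2: "s \<ge> 4 * E * T / (\<gamma> - 1)" using sU unfolding U_def by auto
    have spos: "s > 0" using s1 by simp
    define h where "h t = integral {0..t} (\<lambda>z. g z * Fb (t - z))" for t
    have hb: "\<bar>h t\<bar> \<le> K * (\<delta> * t + T)" if t: "t \<in> {0..s}" for t
      unfolding h_def
    proof (rule inner_bound)
      show "0 \<le> t" using t by simp
      show "0 \<le> K" "0 \<le> \<delta>" "0 \<le> T" using K0 dpos T0 by auto
      fix z assume z: "z \<in> {0..t}"
      then have gz: "\<bar>g z\<bar> \<le> K" using Kb t by auto
      show "\<bar>g z * Fb (t - z)\<bar> \<le> K"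
        using mult_mono[OF gz Fb01(2)[of "t-z"]] K0 Fb01(1)[of "t-z"] by (simp add: abs_mult)
      assume "z \<le> t - T"
      then have "Fb (t - z) \<le> \<delta>" using T by auto
      then show "\<bar>g z * Fb (t - z)\<bar> \<le> K * \<delta>"
        using mult_mono[OF gz] K0 Fb01(1)[of "t-z"] by (simp add: abs_mult)
    qed
    define F where "F t = t powr (\<gamma> - 2) * exp (- \<alpha> / t) * (p * Fb t + h t)" for t
    have Fb: "\<bar>F t\<bar> \<le> (p + K * T) * t powr (\<gamma> - 2) + (K * \<delta>) * t powr (\<gamma> - 1)"
      if t: "t \<in> {0..s}" for t
    proof -
      have ex: "exp (- \<alpha> / t) \<le> 1" using t apos by (simp add: divide_nonneg_nonneg)
      have in1: "\<bar>p * Fb t + h t\<bar> \<le> p + K * (\<delta> * t + T)"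
        using hb[OF t] Fb01[of t] assms(14)
        by (smt (verit) mult_left_le mult_nonneg_nonneg)
      have "\<bar>F t\<bar> = t powr (\<gamma> - 2) * exp (- \<alpha> / t) * \<bar>p * Fb t + h t\<bar>"
        unfolding F_def by (simp add: abs_mult)
      also have "\<dots> \<le> t powr (\<gamma> - 2) * 1 * (p + K * (\<delta> * t + T))"
        using ex in1 by (intro mult_mono) auto
      also have "\<dots> = (p + K * T) * t powr (\<gamma> - 2) + (K * \<delta>) * (t * t powr (\<gamma> - 2))"
        by (simp add: algebra_simps)
      also have "t * t powr (\<gamma> - 2) = t powr (\<gamma> - 1)"
      proof (cases "t = 0")
        case False
        then have "t powr (\<gamma> - 1) = t powr (\<gamma> - 2) * t powr 1"
          using t powr_add[of t "\<gamma> - 2" 1] by simp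
        then show ?thesis using False t by simp
      qed simp
      finally show ?thesis .
    qed
    have Ib: "\<bar>integral {0..s} F\<bar> \<le> (p + K * T) * (s powr (\<gamma>-1) / (\<gamma>-1)) + (K * \<delta>) * (s powr \<gamma> / \<gamma>)"
      by (rule outer_bound) (use spos g1 assms(14) K0 T0 dpos Fb in auto)
    have A: "\<mu> / (s powr \<gamma> * exp (- \<alpha> / s)) \<le> E / s powr \<gamma>"
    proof -
      have "\<mu> / (s powr \<gamma> * exp (- \<alpha> / s)) = \<mu> * exp (\<alpha> / s) / s powr \<gamma>"
        by (simp add: exp_minus field_simps)
      also have "exp (\<alpha> / s) \<le> exp \<alpha>" using s1 apos by (simp add: divide_le_eq_1 divide_le_eq)
      then have "\<mu> * exp (\<alpha> / s) / s powr \<gamma> \<le> E / s powr \<gamma>"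
        unfolding E_def using mpos spos by (intro divide_right_mono) auto
      finally show ?thesis .
    qed
    have gs: "g s = \<mu> / (s powr \<gamma> * exp (- \<alpha> / s)) * integral {0..s} F"
      using eqn[OF spos] unfolding F_def h_def by simp
    have "\<bar>g s\<bar> = \<mu> / (s powr \<gamma> * exp (- \<alpha> / s)) * \<bar>integral {0..s} F\<bar>"
      unfolding gs using mpos by (simp add: abs_mult)
    also have "\<dots> \<le> E / s powr \<gamma> * ((p + K * T) * (s powr (\<gamma>-1) / (\<gamma>-1)) + (K * \<delta>) * (s powr \<gamma> / \<gamma>))"
      using A Ib by (intro mult_mono) (auto simp: mpos less_imp_le Epos)
    also have "\<dots> = E * (p + K * T) / ((\<gamma> - 1) * s) + E * K * \<delta> / \<gamma>"
    proof -
      have "s powr \<gamma> = s powr (\<gamma> - 1) * s"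
        using spos powr_add[of s "\<gamma> - 1" 1] by simp
      then show ?thesis using spos g1 by (simp add: field_simps)
    qed
    also have "E * K * \<delta> / \<gamma> = K / 4" unfolding \<delta>_def using Epos g1 by (simp add: field_simps)
    also have "E * (p + K * T) / ((\<gamma> - 1) * s) = E * p / ((\<gamma> - 1) * s) + K * (E * T / ((\<gamma> - 1) * s))"
      by (simp add: add_divide_distrib algebra_simps)
    also have "E * p / ((\<gamma> - 1) * s) \<le> P"
      unfolding P_def using s1 g1 Epos assms(14)
      by (simp add: divide_simps mult_le_cancel_left1) (smt (verit) mult_pos_pos)
    also have "E * T / ((\<gamma> - 1) * s) \<le> 1 / 4"
      using s2 g1 spos by (simp add: divide_simps mult_ac)
    finally show "\<bar>g s\<bar> \<le> P + K / 2" using K0 by (simp add: mult_left_mono)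
  qed
  have contg: "continuous_on {0..u} g" for u
    using assms(15) by (rule continuous_on_subset) auto
  have "compact (g ` {0..U})" by (intro compact_continuous_image contg compact_Icc)
  then have "bounded (g ` {0..U})" by (rule compact_imp_bounded)
  then obtain C0 where C0': "\<And>x. x \<in> g ` {0..U} \<Longrightarrow> norm x \<le> C0"
    unfolding bounded_iff by blast
  have C0: "\<And>y. y \<in> {0..U} \<Longrightarrow> \<bar>g y\<bar> \<le> C0" using C0' by force
  have main: "\<bar>g u\<bar> \<le> max C0 (2 * P)" if u: "u \<ge> 0" for u
  proof -
    have "continuous_on {0..u} (\<lambda>x. \<bar>g x\<bar>)" by (intro continuous_intros contg)
    then obtain s where s: "s \<in> {0..u}" and smax: "\<And>y. y \<in> {0..u} \<Longrightarrow> \<bar>g y\<bar> \<le> \<bar>g s\<bar>"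
      using continuous_attains_sup[of "{0..u}" "\<lambda>x. \<bar>g x\<bar>"] u by auto
    have "\<bar>g s\<bar> \<le> max C0 (2 * P)"
    proof (cases "s \<le> U")
      case True
      then show ?thesis using C0[of s] s by auto
    next
      case False
      have "\<bar>g s\<bar> \<le> P + \<bar>g s\<bar> / 2"
        by (rule key) (use False s smax in auto)
      then show ?thesis by simp
    qed
    then show ?thesis using smax[of u] u by simp
  qed
  show ?thesis unfolding bounded_iff using main by auto
qed
end
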